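(* For conjunctive guarded systems of type $(A,B)$ and every LTL formula without the next operator $h(A,B_1)$: for all $n\ge2$, if some unconditionally fair initializing run of $(A,B)^{(1,n)}$ satisfies $h(A,B_1)$, then some unconditionally fair initializing run of $(A,B)^{(1,n+1)}$ satisfies $h(A,B_1)$.
   Context: A process template is $U=(Q_U,\mathit{init}_U,\Sigma_U,\delta_U)$ with finite states $Q_U$, initial state $\mathit{init}_U$, finite input alphabet $\Sigma_U$ and guarded transitions $\delta_U\subseteq Q_U\times\Sigma_U\times 2^{Q_A\cup Q_B}\times Q_U$; templates $A,B$ have disjoint state sets and disjoint alphabets. The system $(A,B)^{(1,n)}$ consists of one copy of $A$ and $n$ copies $B_1,\dots,B_n$ of $B$; a global state $s$ gives each process a local state, a global input $e$ gives each process an input letter, and initially all processes are in their initial states. In a conjunctive system a guard $g$ is satisfied for process $p$ in $s$ iff every process $p'\ne p$ has $s(p')\in g$, and $\mathit{init}_A,\mathit{init}_B$ belong to every guard. A local transition $(q,\sigma,g,q')$ of $p$ is enabled for $(s,e)$ if $s(p)=q$, $e(p)=\sigma$ and $g$ is satisfied for $p$ in $s$; a global step changes the state of exactly one process along an enabled transition. A path is a sequence of configurations $(s_1,e_1,p_1),(s_2,e_2,p_2),\dots$ where $p_t$ makes the step from $s_t$ to $s_{t+1}$ under $e_t$, a configuration $(s,e,\bot)$ occurs (as the last one) exactly when all processes are disabled, and $e_{t+1}(p)=e_t(p)$ for every process $p$ not moving at moment $t$. A run is a maximal path from the initial state. A run is unconditionally fair if it is infinite and every process moves infinitely often; it is initializing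 if every process that moves infinitely often visits its template's initial state infinitely often. $h(A,B_1)$ is an LTL formula without next operator over atomic propositions from $Q_A\cup\Sigma_A$ and $(Q_B\cup\Sigma_B)\times\{1\}$, interpreted on the local states and inputs of $A$ and $B_1$ along the run. *)

theory Defs
  imports Main
begin

text \<open>A template U = (Q_U, init_U, Sigma_U, delta_U). States of both templates live in a
  common type 'q and inputs in a common type 's; disjointness is imposed on the sets.\<close>

record ('q, 's) template =
  tQ     :: "'q set"
  tinit  :: 'q
  tSig   :: "'s set"
  tdelta :: "('q \<times> 's \<times> 'q set \<times> 'q) set"

definition template_wf :: "('q, 's) template \<Rightarrow> 'q set \<Rightarrow> bool" where
  "template_wf U QG \<longleftrightarrow> finite (tQ U) \<and> tinit U \<in> tQ U \<and> finite (tSig U) \<and>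
     tdelta U \<subseteq> tQ U \<times> tSig U \<times> Pow QG \<times> tQ U"

definition conj_templates :: "('q, 's) template \<Rightarrow> ('q, 's) template \<Rightarrow> bool" where
  "conj_templates A B \<longleftrightarrow>
     template_wf A (tQ A \<union> tQ B) \<and> template_wf B (tQ A \<union> tQ B) \<and>
     tQ A \<inter> tQ B = {} \<and> tSig A \<inter> tSig B = {} \<and>
     (\<forall>(q, \<sigma>, g, q') \<in> tdelta A \<union> tdelta B. tinit A \<in> g \<and> tinit B \<in> g)"

text \<open>Processes are numbered 0..n: process 0 is the copy of A, process i (1 \<le> i \<le> n) is B_i.\<close>

definition tmpl :: "('q, 's) template \<Rightarrow> ('q, 's) template \<Rightarrow> nat \<Rightarrow> ('q, 's) template" where
  "tmpl A B p = (if p = 0 then A else B)"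

text \<open>Configuration (s, e, p): global state, global input, process that moves.
  (Only infinite runs matter below, so the deadlock marker \<bottom> never occurs.)\<close>

type_synonym ('q, 's) config = "(nat \<Rightarrow> 'q) \<times> (nat \<Rightarrow> 's) \<times> nat"

definition cst :: "('q, 's) config \<Rightarrow> nat \<Rightarrow> 'q" where "cst c = fst c"
definition cinp :: "('q, 's) config \<Rightarrow> nat \<Rightarrow> 's" where "cinp c = fst (snd c)"
definition cmov :: "('q, 's) config \<Rightarrow> nat" where "cmov c = snd (snd c)"

definition guard_sat :: "nat \<Rightarrow> 'q set \<Rightarrow> (nat \<Rightarrow> 'q) \<Rightarrow> nat \<Rightarrow> bool" where
  "guard_sat n g s p \<longleftrightarrow> (\<forall>p' \<le> n. p' \<noteq> p \<longrightarrow> s p' \<in> g)"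

definition enabled ::
  "('q, 's) template \<Rightarrow> ('q, 's) template \<Rightarrow> nat \<Rightarrow> (nat \<Rightarrow> 'q) \<Rightarrow> (nat \<Rightarrow> 's) \<Rightarrow> nat
    \<Rightarrow> ('q \<times> 's \<times> 'q set \<times> 'q) \<Rightarrow> bool" where
  "enabled A B n s e p tr \<longleftrightarrow> p \<le> n \<and> tr \<in> tdelta (tmpl A B p) \<and>
     (case tr of (q, \<sigma>, g, q') \<Rightarrow> s p = q \<and> e p = \<sigma> \<and> guard_sat n g s p)"

definition gstep ::
  "('q, 's) template \<Rightarrow> ('q, 's) template \<Rightarrow> nat \<Rightarrow> ('q, 's) config \<Rightarrow> ('q, 's) config \<Rightarrow> bool" where
  "gstep A B n c c' \<longleftrightarrow> cmov c \<le> n \<and>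
     (\<exists>g. enabled A B n (cst c) (cinp c) (cmov c)
            (cst c (cmov c), cinp c (cmov c), g, cst c' (cmov c))) \<and>
     (\<forall>p \<le> n. p \<noteq> cmov c \<longrightarrow> cst c' p = cst c p \<and> cinp c' p = cinp c p)"

text \<open>Infinite run of (A,B)^(1,n) (an infinite path from the initial state is maximal).\<close>
definition inf_run ::
  "('q, 's) template \<Rightarrow> ('q, 's) template \<Rightarrow> nat \<Rightarrow> (nat \<Rightarrow> ('q, 's) config) \<Rightarrow> bool" where
  "inf_run A B n \<rho> \<longleftrightarrow>
     (\<forall>p \<le> n. cst (\<rho> 0) p = tinit (tmpl A B p)) \<and>
     (\<forall>t. \<forall>p \<le> n. cinp (\<rho> t) p \<in> tSig (tmpl A B p)) \<and>
     (\<forall>t. gstep A B n (\<rho> t) (\<rho> (Suc t)))"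

definition uncond_fair_run ::
  "('q, 's) template \<Rightarrow> ('q, 's) template \<Rightarrow> nat \<Rightarrow> (nat \<Rightarrow> ('q, 's) config) \<Rightarrow> bool" where
  "uncond_fair_run A B n \<rho> \<longleftrightarrow> inf_run A B n \<rho> \<and>
     (\<forall>p \<le> n. infinite {t. cmov (\<rho> t) = p})"

definition initializing ::
  "('q, 's) template \<Rightarrow> ('q, 's) template \<Rightarrow> nat \<Rightarrow> (nat \<Rightarrow> ('q, 's) config) \<Rightarrow> bool" where
  "initializing A B n \<rho> \<longleftrightarrow>
     (\<forall>p \<le> n. infinite {t. cmov (\<rho> t) = p} \<longrightarrow>
               infinite {t. cst (\<rho> t) p = tinit (tmpl A B p)})"

datatype 'a ltlx =
    LTrue
  | LProp 'a
  | LNot "'a ltlx"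
  | LAnd "'a ltlx" "'a ltlx"
  | LUntil "'a ltlx" "'a ltlx"

fun ltlx_sem :: "(nat \<Rightarrow> 'a set) \<Rightarrow> nat \<Rightarrow> 'a ltlx \<Rightarrow> bool" where
  "ltlx_sem w i LTrue = True"
| "ltlx_sem w i (LProp a) = (a \<in> w i)"
| "ltlx_sem w i (LNot \<phi>) = (\<not> ltlx_sem w i \<phi>)"
| "ltlx_sem w i (LAnd \<phi> \<psi>) = (ltlx_sem w i \<phi> \<and> ltlx_sem w i \<psi>)"
| "ltlx_sem w i (LUntil \<phi> \<psi>) =
     (\<exists>k \<ge> i. ltlx_sem w k \<psi> \<and> (\<forall>j. i \<le> j \<and> j < k \<longrightarrow> ltlx_sem w j \<phi>))"

text \<open>Atomic propositions: Q_A \<union> Sigma_A (about process A) and (Q_B \<union> Sigma_B) \<times> {1} (about B_1).\<close>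
datatype ('q, 's) ap = AState 'q | AInput 's | B1State 'q | B1Input 's

definition ap_ok :: "('q, 's) template \<Rightarrow> ('q, 's) template \<Rightarrow> ('q, 's) ap \<Rightarrow> bool" where
  "ap_ok A B a = (case a of AState q \<Rightarrow> q \<in> tQ A | AInput \<sigma> \<Rightarrow> \<sigma> \<in> tSig A
                   | B1State q \<Rightarrow> q \<in> tQ B | B1Input \<sigma> \<Rightarrow> \<sigma> \<in> tSig B)"

definition run_label :: "(nat \<Rightarrow> ('q, 's) config) \<Rightarrow> nat \<Rightarrow> ('q, 's) ap set" where
  "run_label \<rho> t = {AState (cst (\<rho> t) 0), AInput (cinp (\<rho> t) 0),
                     B1State (cst (\<rho> t) 1), B1Input (cinp (\<rho> t) 1)}"

definition run_sat :: "(nat \<Rightarrow> ('q, 's) config) \<Rightarrow> ('q, 's) ap ltlx \<Rightarrow> bool" where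
  "run_sat \<rho> h \<longleftrightarrow> ltlx_sem (run_label \<rho>) 0 h"

end

theory Submission
  imports Defs "HOL-Library.Infinite_Set"
begin


definition tw :: "nat \<Rightarrow> 'q \<Rightarrow> 's \<Rightarrow> bool \<Rightarrow> ('q,'s) config \<Rightarrow> ('q,'s) config" where
"tw N iB s0 b c = ((\<lambda>p. if p = 2 then (if b then iB else cst c 2) else if p = N then (if b then cst c 2 else iB) else cst c p),
 (\<lambda>p. if p = 2 then (if b then s0 else cinp c 2) else if p = N then (if b then cinp c 2 else s0) else cinp c p),
 (if cmov c = 2 \<and> b then N else cmov c))"

lemma tw_simps:
  "cst (tw N iB s0 b c) p = (if p = 2 then (if b then iB else cst c 2) else if p = N then (if b then cst c 2 else iB) else cst c p)"
  "cinp (tw N iB s0 b c) p = (if p = 2 then (if b then s0 else cinp c 2) else if p = N then (if b then cinp c 2 else s0) else cinp c p)"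
  "cmov (tw N iB s0 b c) = (if cmov c = 2 \<and> b then N else cmov c)"
  by (simp_all add: tw_def cst_def cinp_def cmov_def)

lemma guard_init:
  assumes "conj_templates A B" "(q, \<sigma>, g, q') \<in> tdelta (tmpl A B p)"
  shows "tinit B \<in> g"
proof -
  have "(q, \<sigma>, g, q') \<in> tdelta A \<union> tdelta B" using assms(2) by (auto simp: tmpl_def split: if_splits)
  then show ?thesis using assms(1) unfolding conj_templates_def by fastforce
qed

lemma tw_step:
  assumes cj: "conj_templates A B" and n2: "2 \<le> n" and st: "gstep A B n c c'"
    and Y1: "cst Y = cst (tw (Suc n) (tinit B) s0 b c')"
    and Y2: "cinp Y = cinp (tw (Suc n) (tinit B) s0 b c')"
  shows "gstep A B (Suc n) (tw (Suc n) (tinit B) s0 b c) Y"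
proof -
  let ?T = "tw (Suc n) (tinit B) s0 b c"
  have m: "cmov c \<le> n" using st unfolding gstep_def by auto
  obtain g where en: "enabled A B n (cst c) (cinp c) (cmov c) (cst c (cmov c), cinp c (cmov c), g, cst c' (cmov c))"
    and fr: "\<forall>p \<le> n. p \<noteq> cmov c \<longrightarrow> cst c' p = cst c p \<and> cinp c' p = cinp c p"
    using st unfolding gstep_def by auto
  have tr: "(cst c (cmov c), cinp c (cmov c), g, cst c' (cmov c)) \<in> tdelta (tmpl A B (cmov c))"
    and gs: "guard_sat n g (cst c) (cmov c)"
    using en unfolding enabled_def by auto
  have ig: "tinit B \<in> g" using guard_init[OF cj tr] .
  have tm: "tmpl A B (Suc n) = tmpl A B 2" by (simp add: tmpl_def)
  have gs': "\<And>p. p \<le> n \<Longrightarrow> p \<noteq> cmov c \<Longrightarrow> cst c p \<in> g" using gs unfolding guard_sat_def by auto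
  show ?thesis
  proof (cases "cmov c = 2 \<and> b")
    case True
    have "enabled A B (Suc n) (cst ?T) (cinp ?T) (cmov ?T) (cst ?T (cmov ?T), cinp ?T (cmov ?T), g, cst Y (cmov ?T))"
      unfolding enabled_def guard_sat_def using True tr tm n2 ig gs' Y1
      by (auto simp: tw_simps)
    moreover have "\<forall>p \<le> Suc n. p \<noteq> cmov ?T \<longrightarrow> cst Y p = cst ?T p \<and> cinp Y p = cinp ?T p"
      using True fr Y1 Y2 n2 by (auto simp: tw_simps)
    ultimately show ?thesis unfolding gstep_def using True by (auto simp: tw_simps)
  next
    case False
    have "enabled A B (Suc n) (cst ?T) (cinp ?T) (cmov ?T) (cst ?T (cmov ?T), cinp ?T (cmov ?T), g, cst Y (cmov ?T))"
      unfolding enabled_def guard_sat_def using False tr tm n2 ig gs' Y1 m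
      by (auto simp: tw_simps)
    moreover have "\<forall>p \<le> Suc n. p \<noteq> cmov ?T \<longrightarrow> cst Y p = cst ?T p \<and> cinp Y p = cinp ?T p"
      using False fr Y1 Y2 n2 m by (auto simp: tw_simps)
    ultimately show ?thesis unfolding gstep_def using False m by (auto simp: tw_simps)
  qed
qed



fun ms :: "(nat \<Rightarrow> bool) \<Rightarrow> (nat \<Rightarrow> bool) \<Rightarrow> nat \<Rightarrow> bool \<times> bool" where
  "ms mv tt 0 = (False, False)"
| "ms mv tt (Suc t) = (let pf = ms mv tt t; f' = snd pf \<or> mv t in
     if f' \<and> tt (Suc t) then (\<not> fst pf, False) else (fst pf, f'))"

definition par where "par mv tt t = fst (ms mv tt t)"

lemma par_switch: "par mv tt (Suc t) \<noteq> par mv tt t \<Longrightarrow> tt (Suc t)"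
  by (auto simp: par_def Let_def split: if_splits)

lemma switch_f: "par mv tt (Suc t) \<noteq> par mv tt t \<Longrightarrow> snd (ms mv tt t) \<or> mv t"
  by (auto simp: par_def Let_def split: if_splits)

lemma P2: "snd (ms mv tt t) \<Longrightarrow> \<exists>u<t. mv u \<and> (\<forall>v. u \<le> v \<and> v \<le> t \<longrightarrow> par mv tt v = par mv tt t)"
proof (induction t)
  case 0 then show ?case by simp
next
  case (Suc t)
  have ns: "\<not> ((snd (ms mv tt t) \<or> mv t) \<and> tt (Suc t))" using Suc.prems by (auto simp: Let_def split: if_splits)
  then have pe: "par mv tt (Suc t) = par mv tt t" by (auto simp: par_def Let_def)
  show ?case
  proof (cases "mv t")
    case True
    have "\<forall>v. t \<le> v \<and> v \<le> Suc t \<longrightarrow> par mv tt v = par mv tt (Suc t)"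
    proof (intro allI impI)
      fix v assume "t \<le> v \<and> v \<le> Suc t"
      then have "v = t \<or> v = Suc t" by linarith
      then show "par mv tt v = par mv tt (Suc t)" using pe by metis
    qed
    then show ?thesis using True by blast
  next
    case False
    then have "snd (ms mv tt t)" using Suc.prems ns by (auto simp: Let_def split: if_splits)
    then obtain u where "u < t" "mv u" "\<forall>v. u \<le> v \<and> v \<le> t \<longrightarrow> par mv tt v = par mv tt t" using Suc.IH by blast
    note uu = this
    have "\<forall>v. u \<le> v \<and> v \<le> Suc t \<longrightarrow> par mv tt v = par mv tt (Suc t)"
    proof (intro allI impI)
      fix v assume "u \<le> v \<and> v \<le> Suc t"
      then have "(u \<le> v \<and> v \<le> t) \<or> v = Suc t" by linarith
      then show "par mv tt v = par mv tt (Suc t)" using pe uu(3) by metis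
    qed
    then show ?thesis using uu by (meson less_SucI)
  qed
qed


lemma P3:
  assumes M: "\<forall>N. \<exists>u\<ge>N. mv u" and T: "\<forall>N. \<exists>v>N. tt v"
  shows "\<exists>w\<ge>N. par mv tt (Suc w) \<noteq> par mv tt w"
proof (rule ccontr)
  assume "\<not> ?thesis"
  then have ns: "\<And>w. w \<ge> N \<Longrightarrow> par mv tt (Suc w) = par mv tt w" by auto
  obtain u where u: "u \<ge> N" "mv u" using M by blast
  obtain v where v: "v > u" "tt v" using T by blast
  have key: "w \<ge> u \<Longrightarrow> snd (ms mv tt w) \<or> mv w" for w
  proof (induction w)
    case 0 then show ?case using u by simp
  next
    case (Suc w)
    show ?case
    proof (cases "Suc w = u")
      case True then show ?thesis using u by simp
    next
      case False
      then have "w \<ge> u" using Suc.prems by simp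
      then have f: "snd (ms mv tt w) \<or> mv w" using Suc.IH by simp
      have "par mv tt (Suc w) = par mv tt w" using ns \<open>w \<ge> u\<close> u by simp
      then have "\<not> tt (Suc w)" using f by (auto simp: par_def Let_def split: if_splits)
      then have "snd (ms mv tt (Suc w))" using f by (simp add: Let_def)
      then show ?thesis by simp
    qed
  qed
  obtain w where w: "v = Suc w" using v by (cases v) auto
  have "w \<ge> u" using v w by simp
  then have "snd (ms mv tt w) \<or> mv w" using key by simp
  then have "par mv tt (Suc w) \<noteq> par mv tt w" using v w by (simp add: par_def Let_def)
  then show False using ns \<open>w \<ge> u\<close> u by simp
qed

lemma G:
  assumes M: "\<forall>N. \<exists>u\<ge>N. mv u" and T: "\<forall>N. \<exists>v>N. tt v"
  shows "\<exists>w\<ge>a. par mv tt (Suc w) \<noteq> par mv tt w \<and> par mv tt w = par mv tt a"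
proof (rule ccontr)
  assume "\<not> ?thesis"
  then have h: "\<And>w. w \<ge> a \<Longrightarrow> par mv tt w = par mv tt a \<Longrightarrow> par mv tt (Suc w) = par mv tt w" by blast
  have c: "w \<ge> a \<Longrightarrow> par mv tt w = par mv tt a" for w
  proof (induction w)
    case 0 then show ?case by simp
  next
    case (Suc w) then show ?case using h by (cases "Suc w = a") (auto simp: le_Suc_eq)
  qed
  obtain w where "w \<ge> a" "par mv tt (Suc w) \<noteq> par mv tt w" using P3[OF M T] by blast
  then show False using c[of w] c[of "Suc w"] by simp
qed

lemma L:
  assumes "par mv tt (Suc w) \<noteq> par mv tt w" "par mv tt (Suc w1) \<noteq> par mv tt w1" "w1 < w"
  shows "\<exists>u. w1 < u \<and> mv u \<and> par mv tt u = par mv tt w"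
proof -
  have "snd (ms mv tt w) \<or> mv w" using switch_f[OF assms(1)] .
  then show ?thesis
  proof
    assume "mv w" then show ?thesis using assms(3) by blast
  next
    assume "snd (ms mv tt w)"
    then obtain u where u: "u < w" "mv u" "\<forall>v. u \<le> v \<and> v \<le> w \<longrightarrow> par mv tt v = par mv tt w" using P2 by blast
    have "w1 < u"
    proof (rule ccontr)
      assume "\<not> w1 < u"
      then have "u \<le> w1 \<and> w1 \<le> w" "u \<le> Suc w1 \<and> Suc w1 \<le> w" using u assms(3) by linarith+
      then have "par mv tt w1 = par mv tt w" "par mv tt (Suc w1) = par mv tt w" using u(3) by blast+
      then show False using assms(2) by simp
    qed
    then show ?thesis using u(2) u(3) \<open>u < w\<close> by (meson less_imp_le order_refl)
  qed
qed

lemma P4: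
  assumes M: "\<forall>N. \<exists>u\<ge>N. mv u" and T: "\<forall>N. \<exists>v>N. tt v"
  shows "\<exists>u\<ge>N. mv u \<and> par mv tt u = b"
proof -
  obtain w1 where w1: "w1 \<ge> N" "par mv tt (Suc w1) \<noteq> par mv tt w1" using P3[OF M T] by blast
  obtain w2 where w2: "w2 \<ge> Suc w1" "par mv tt (Suc w2) \<noteq> par mv tt w2" "par mv tt w2 = par mv tt (Suc w1)"
    using G[OF M T, of "Suc w1"] by blast
  obtain w3 where w3: "w3 \<ge> Suc w2" "par mv tt (Suc w3) \<noteq> par mv tt w3" "par mv tt w3 = par mv tt (Suc w2)"
    using G[OF M T, of "Suc w2"] by blast
  have "\<exists>w. w1 < w \<and> par mv tt (Suc w) \<noteq> par mv tt w \<and> par mv tt w = b"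
  proof (cases "par mv tt w2 = b")
    case True then show ?thesis using w2 by (intro exI[of _ w2]) auto
  next
    case False then show ?thesis using w2 w3 by (intro exI[of _ w3]) auto
  qed
  then obtain w where "w1 < w" "par mv tt (Suc w) \<noteq> par mv tt w" "par mv tt w = b" by blast
  then obtain u where "w1 < u" "mv u" "par mv tt u = b" using L[OF _ w1(2)] by metis
  then show ?thesis using w1 by (intro exI[of _ u]) auto
qed



theorem mainTheorem13:
  fixes A B :: "('q, 's) template" and h :: "('q, 's) ap ltlx" and n :: nat
  assumes "conj_templates A B"
    and "\<forall>a \<in> set_ltlx h. ap_ok A B a"
    and "n \<ge> 2"
    and "\<exists>\<rho>. uncond_fair_run A B n \<rho> \<and> initializing A B n \<rho> \<and> run_sat \<rho> h"
  shows "\<exists>\<rho>. uncond_fair_run A B (Suc n) \<rho> \<and> initializing A B (Suc n) \<rho> \<and> run_sat \<rho> h"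
proof -
  note cj = assms(1) and n2 = assms(3)
  obtain \<rho> where fr: "uncond_fair_run A B n \<rho>" and ini: "initializing A B n \<rho>" and sat: "run_sat \<rho> h"
    using assms(4) by blast
  define iB where "iB = tinit B"
  have t2: "tmpl A B 2 = B" "tmpl A B (Suc n) = B" by (simp_all add: tmpl_def)
  have ir: "inf_run A B n \<rho>" and fair: "\<And>p. p \<le> n \<Longrightarrow> infinite {t. cmov (\<rho> t) = p}"
    using fr unfolding uncond_fair_run_def by auto
  have oi: "\<And>p. p \<le> n \<Longrightarrow> infinite {t. cst (\<rho> t) p = tinit (tmpl A B p)}"
    using ini fair unfolding initializing_def by auto
  have M0: "infinite {t. cmov (\<rho> t) = 2}" using fair n2 by simp
  have I0: "infinite {t. cst (\<rho> t) 2 = iB}" using oi[of 2] n2 t2 by (simp add: iB_def)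
  have finS: "finite (tSig B)" using cj unfolding conj_templates_def template_wf_def by auto
  have insig: "\<And>t p. p \<le> n \<Longrightarrow> cinp (\<rho> t) p \<in> tSig (tmpl A B p)" using ir unfolding inf_run_def by auto
  have "(\<lambda>t. cinp (\<rho> t) 2) ` {t. cst (\<rho> t) 2 = iB} \<subseteq> tSig B" using insig[of 2] n2 t2 by auto
  then have "finite ((\<lambda>t. cinp (\<rho> t) 2) ` {t. cst (\<rho> t) 2 = iB})" using finS finite_subset by blast
  from pigeonhole_infinite[OF I0 this] obtain t0 where
    "t0 \<in> {t. cst (\<rho> t) 2 = iB}" and
    T0: "infinite {a \<in> {t. cst (\<rho> t) 2 = iB}. cinp (\<rho> a) 2 = cinp (\<rho> t0) 2}" by blast
  define s0 where "s0 = cinp (\<rho> t0) 2"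
  have s0S: "s0 \<in> tSig B" using insig[of 2 t0] n2 t2 by (simp add: s0_def)
  define mv where "mv = (\<lambda>t. cmov (\<rho> t) = 2)"
  define tt where "tt = (\<lambda>t. cst (\<rho> t) 2 = iB \<and> cinp (\<rho> t) 2 = s0)"
  have T1: "infinite {t. tt t}" using T0 unfolding tt_def s0_def by simp
  have M: "\<forall>N. \<exists>u\<ge>N. mv u" using M0 unfolding mv_def infinite_nat_iff_unbounded_le by auto
  have T: "\<forall>N. \<exists>v>N. tt v" using T1 unfolding infinite_nat_iff_unbounded by auto
  have inf4: "infinite {t. mv t \<and> par mv tt t = b}" for b
    using P4[OF M T, of _ b] unfolding infinite_nat_iff_unbounded_le by auto
  define \<rho>' where "\<rho>' = (\<lambda>t. tw (Suc n) iB s0 (par mv tt t) (\<rho> t))"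
  have cm: "\<And>t. cmov (\<rho> t) \<le> n" using ir unfolding inf_run_def gstep_def by auto
  have run: "inf_run A B (Suc n) \<rho>'"
    unfolding inf_run_def
  proof (intro conjI allI impI)
    fix p assume p: "p \<le> Suc n"
    show "cst (\<rho>' 0) p = tinit (tmpl A B p)"
      using ir p n2 t2 unfolding inf_run_def \<rho>'_def iB_def
      by (auto simp: tw_simps le_Suc_eq)
  next
    fix t p assume p: "p \<le> Suc n"
    show "cinp (\<rho>' t) p \<in> tSig (tmpl A B p)"
      using insig[of 2 t] insig[of p t] p n2 t2 s0S unfolding \<rho>'_def
      by (auto simp: tw_simps le_Suc_eq)
  next
    fix t
    have st: "gstep A B n (\<rho> t) (\<rho> (Suc t))" using ir unfolding inf_run_def by auto
    have e: "cst (\<rho>' (Suc t)) = cst (tw (Suc n) (tinit B) s0 (par mv tt t) (\<rho> (Suc t))) \<and>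
          cinp (\<rho>' (Suc t)) = cinp (tw (Suc n) (tinit B) s0 (par mv tt t) (\<rho> (Suc t)))"
    proof (cases "par mv tt (Suc t) = par mv tt t")
      case True then show ?thesis unfolding \<rho>'_def iB_def by simp
    next
      case False
      then have "tt (Suc t)" by (rule par_switch)
      then show ?thesis unfolding \<rho>'_def iB_def tt_def by (auto simp: tw_simps iB_def)
    qed
    show "gstep A B (Suc n) (\<rho>' t) (\<rho>' (Suc t))"
      using tw_step[OF cj n2 st, of "\<rho>' (Suc t)" s0 "par mv tt t"] e unfolding \<rho>'_def iB_def by simp
  qed
  have mvs: "{t. cmov (\<rho>' t) = p} =
     (if p = 2 then {t. mv t \<and> par mv tt t = False} else if p = Suc n then {t. mv t \<and> par mv tt t = True}
      else {t. cmov (\<rho> t) = p})" for p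
    using n2 cm unfolding \<rho>'_def mv_def
    by (auto simp: tw_simps) (metis Suc_n_not_le_n)+
  have fair': "uncond_fair_run A B (Suc n) \<rho>'"
    unfolding uncond_fair_run_def
  proof (intro conjI allI impI run)
    fix p assume "p \<le> Suc n"
    then show "infinite {t. cmov (\<rho>' t) = p}"
      using mvs[of p] inf4[of False] inf4[of True] fair[of p] n2 by (auto simp: le_Suc_eq)
  qed
  have ini': "initializing A B (Suc n) \<rho>'"
    unfolding initializing_def
  proof (intro allI impI)
    fix p assume p: "p \<le> Suc n"
    show "infinite {t. cst (\<rho>' t) p = tinit (tmpl A B p)}"
    proof (cases "p = 2 \<or> p = Suc n")
      case True
      have "{t. mv t \<and> par mv tt t = (p = 2)} \<subseteq> {t. cst (\<rho>' t) p = tinit (tmpl A B p)}"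
        using True n2 t2 unfolding \<rho>'_def iB_def by (auto simp: tw_simps)
      then show ?thesis using inf4 finite_subset by blast
    next
      case False
      then have "p \<le> n" using p by auto
      then have "{t. cst (\<rho> t) p = tinit (tmpl A B p)} = {t. cst (\<rho>' t) p = tinit (tmpl A B p)}"
        using False unfolding \<rho>'_def by (auto simp: tw_simps)
      then show ?thesis using oi[OF \<open>p \<le> n\<close>] by simp
    qed
  qed
  have "run_label \<rho>' = run_label \<rho>"
    using n2 unfolding \<rho>'_def by (auto simp: run_label_def tw_simps)
  then have "run_sat \<rho>' h" using sat unfolding run_sat_def by simp
  then show ?thesis using fair' ini' by blast
qed

end
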